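(* Suppose that $\rho\ge2$ and $\rho=t-\Theta(1)$. Then $y_t(\rho)=\log(t2^t)+O(1)$. Explicitly: for all constants $C>c>0$ there is $K$ such that for every positive integer $t$ and real $\rho\ge2$ with $c<t-\rho<C$, we have $|y_t(\rho)-\log(t2^t)|\le K$.
   Context: $d_i=2^{\binom i2}i!$. For positive integer $t$ and real $1<\rho<t$, $x_t(\rho),y_t(\rho)$ are the unique reals $x,y$ with $\sum_{i=1}^t e^{x+iy}d_i^{-1}=1$ and $\sum_{i=1}^t ie^{x+iy}d_i^{-1}=\rho$. Logarithms are natural. *)

theory Defs
  imports "HOL-Analysis.Analysis"
begin

definition d :: "nat \<Rightarrow> real" where
  "d i = 2 powr (real (i choose 2)) * fact i"

definition xy_eqs :: "nat \<Rightarrow> real \<Rightarrow> real \<Rightarrow> real \<Rightarrow> bool" where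
  "xy_eqs t \<rho> x y \<longleftrightarrow>
     (\<Sum>i=1..t. exp (x + real i * y) / d i) = 1 \<and>
     (\<Sum>i=1..t. real i * exp (x + real i * y) / d i) = \<rho>"

definition xy :: "nat \<Rightarrow> real \<Rightarrow> real \<times> real" where
  "xy t \<rho> = (THE p. xy_eqs t \<rho> (fst p) (snd p))"

definition x_t :: "nat \<Rightarrow> real \<Rightarrow> real" where
  "x_t t \<rho> = fst (xy t \<rho>)"

definition y_t :: "nat \<Rightarrow> real \<Rightarrow> real" where
  "y_t t \<rho> = snd (xy t \<rho>)"

end

theory Submission
  imports Defs
begin


lemma d_pos: "d i > 0" by (simp add: d_def)

lemma d_Suc: "d (Suc i) = d i * 2^i * (i+1)"
proof -
  have "Suc i choose 2 = (i choose 2) + i"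
    by (simp add: numeral_2_eq_2)
  then have "2 powr real (Suc i choose 2) = 2 powr real (i choose 2) * 2^i"
    by (simp add: powr_add powr_realpow)
  then show ?thesis by (simp add: d_def algebra_simps)
qed

lemma d_one: "d 1 = 1" by (simp add: d_def)

lemma d_lower: "i \<ge> 1 \<Longrightarrow> real i * 2^(i-1) \<le> d i"
proof (induction i rule: dec_induct)
  case base then show ?case by (simp add: d_def numeral_2_eq_2)
next
  case (step n)
  have "real (Suc n) * 2 ^ (Suc n - 1) = real (n+1) * 2^n" by simp
  also have "\<dots> \<le> (real n * 2^(n-1)) * 2^n * (n+1)"
  proof -
    have "1 \<le> real n" using step(1) by simp
    moreover have "(1::real) \<le> 2^(n-1)" by simp
    ultimately have "1 \<le> real n * 2^(n-1)" using mult_mono[of 1 "real n" 1 "2^(n-1)"] by simp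
    then show ?thesis by (simp add: mult_right_mono mult.commute)
  qed
  also have "\<dots> \<le> d n * 2^n * (n+1)" using step by (simp add: mult_right_mono)
  finally show ?case by (simp add: d_Suc)
qed

lemma geo_half: "(\<Sum>i=1..t. (1/2::real)^(i-1)) = 2 - 2*(1/2)^t"
  by (induction t) (auto simp: power_Suc)

lemma sum_lin2: "(\<Sum>i=1..t. (real t - real i) * 2^i) = 2^(t+1) - 2*real t - 2"
proof (induction t)
  case 0 then show ?case by simp
next
  case (Suc t)
  have g: "(\<Sum>i=1..t. (2::real)^i) = 2^(t+1) - 2"
    by (induction t) auto
  have "(\<Sum>i=1..Suc t. (real (Suc t) - real i) * 2^i) = (\<Sum>i=1..t. (real t - real i) * 2^i + 2^i)"
    by (simp add: algebra_simps)
  also have "\<dots> = 2^(t+1) - 2*real t - 2 + (2^(t+1) - 2)" using Suc g by (simp add: sum.distrib)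
  finally show ?case by simp
qed

definition pp :: "real \<Rightarrow> real \<Rightarrow> nat \<Rightarrow> real" where
  "pp x y i = exp (x + real i * y) / d i"

lemma pp_pos: "pp x y i > 0" by (simp add: pp_def d_pos)
lemma pp_nonneg: "pp x y i \<ge> 0" using pp_pos[of x y i] by simp

lemma pp_eqs:
  assumes "xy_eqs t m x y"
  shows "(\<Sum>i=1..t. pp x y i) = 1" "(\<Sum>i=1..t. real i * pp x y i) = m"
  using assms by (simp_all add: xy_eqs_def pp_def)

lemma pp_le1:
  assumes "xy_eqs t m x y" "j \<in> {1..t}"
  shows "pp x y j \<le> 1"
proof -
  have "pp x y j \<le> (\<Sum>i=1..t. pp x y i)"
    by (rule member_le_sum) (use assms(2) pp_nonneg in auto)
  then show ?thesis using pp_eqs(1)[OF assms(1)] by simp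
qed

lemma pp_Suc: "pp x y (Suc i) = pp x y i * exp y / (2^i * (real i+1))"
proof -
  have "exp (x + real (Suc i) * y) = exp (x + real i * y) * exp y"
    by (simp add: exp_add[symmetric] algebra_simps)
  then show ?thesis using d_pos[of i] by (simp add: pp_def d_Suc field_simps)
qed

lemma lowA:
  assumes eq: "xy_eqs t m x y" and ey: "exp y \<le> 1"
  shows "m - 1 \<le> 2 * exp y"
proof -
  let ?p = "pp x y"
  have s1: "(\<Sum>i=1..t. ?p i) = 1" and sm: "(\<Sum>i=1..t. real i * ?p i) = m"
    using pp_eqs[OF eq] by auto
  have e1: "m - 1 = (\<Sum>i=1..t. (real i - 1) * ?p i)"
    using s1 sm by (simp add: algebra_simps sum_subtractf)
  have p1: "exp (x + y) \<le> 1"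
  proof (cases "t \<ge> 1")
    case True
    then have "?p 1 \<le> 1" using pp_le1[OF eq] by auto
    then show ?thesis by (simp add: pp_def d_def numeral_2_eq_2)
  next
    case False
    then show ?thesis using s1 by simp
  qed
  have trm: "(real i - 1) * ?p i \<le> exp y * (1/2)^(i-1)" if "i \<in> {1..t}" for i
  proof (cases "i = 1")
    case True then show ?thesis by simp
  next
    case False
    then have i2: "i \<ge> 2" using that by auto
    have "exp (x + real i * y) = exp (x + y) * exp y ^ (i-1)"
    proof -
      have "x + real i * y = (x + y) + real (i-1) * y" using i2 by (simp add: algebra_simps of_nat_diff)
      then show ?thesis by (simp add: exp_add exp_of_nat_mult)
    qed
    also have "\<dots> \<le> 1 * exp y"
    proof (rule mult_mono)
      show "exp y ^ (i-1) \<le> exp y" using power_decreasing[of 1 "i-1" "exp y"] ey i2 by simp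
    qed (use p1 in auto)
    finally have pe: "?p i \<le> exp y / d i" using d_pos[of i] by (simp add: pp_def divide_right_mono)
    have dl0: "(real i - 1) * 2^(i-1) \<le> real i * 2^(i-1)" by (intro mult_right_mono) auto
    have dl: "(real i - 1) * 2^(i-1) \<le> d i" using order_trans[OF dl0 d_lower[of i]] i2 by simp
    have "(real i - 1) * ?p i \<le> (real i - 1) * (exp y / d i)"
      using pe i2 by (intro mult_left_mono) auto
    also have "\<dots> = exp y * ((real i - 1) / d i)" by simp
    also have "\<dots> \<le> exp y * (1/2)^(i-1)"
    proof (intro mult_left_mono)
      show "(real i - 1) / d i \<le> (1/2)^(i-1)"
        using dl d_pos[of i] by (simp add: divide_simps power_one_over)
    qed simp
    finally show ?thesis .
  qed
  have "m - 1 \<le> (\<Sum>i=1..t. exp y * (1/2)^(i-1))"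
    unfolding e1 by (rule sum_mono) (use trm in auto)
  also have "\<dots> = exp y * (2 - 2*(1/2)^t)" using geo_half[of t] by (simp add: sum_distrib_left[symmetric])
  also have "\<dots> \<le> exp y * 2" by (intro mult_left_mono) auto
  finally show ?thesis by simp
qed

lemma highB:
  assumes eq: "xy_eqs t m x y"
  shows "real t - m \<le> 2 * real t * 2^t / exp y"
proof -
  let ?p = "pp x y"
  have s1: "(\<Sum>i=1..t. ?p i) = 1" and sm: "(\<Sum>i=1..t. real i * ?p i) = m"
    using pp_eqs[OF eq] by auto
  have e1: "real t - m = (\<Sum>i=1..t. (real t - real i) * ?p i)"
    using s1 sm by (simp add: algebra_simps sum_subtractf sum_distrib_left[symmetric])
  have trm: "(real t - real i) * ?p i \<le> (real t / exp y) * ((real t - real i) * 2^i)" if "i \<in> {1..t}" for i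
  proof (cases "i = t")
    case True then show ?thesis by simp
  next
    case False
    then have it: "i < t" "Suc i \<in> {1..t}" using that by auto
    have pos: "(2::real)^i * (real i+1) > 0" by simp
    have h: "?p (Suc i) * (2^i * (real i+1)) = ?p i * exp y" using pos by (simp add: pp_Suc)
    have "?p i = ?p (Suc i) * 2^i * (i+1) / exp y"
      using h by (simp add: eq_divide_eq mult.assoc add.commute)
    also have "\<dots> = 2^i * (?p (Suc i) * (real i + 1)) / exp y" by (simp add: algebra_simps)
    also have "\<dots> \<le> 2^i * (1 * real t) / exp y"
    proof -
      have "?p (Suc i) * (real i + 1) \<le> 1 * real t"
        using pp_le1[OF eq it(2)] it(1) pp_pos[of x y "Suc i"]
        by (intro mult_mono) auto
      then show ?thesis by (intro divide_right_mono mult_left_mono) auto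
    qed
    finally have "?p i \<le> 2^i * t / exp y" by simp
    then have "(real t - real i) * ?p i \<le> (real t - real i) * (2^i * t / exp y)"
      using it by (intro mult_left_mono) auto
    then show ?thesis by (simp add: field_simps)
  qed
  have "real t - m \<le> (\<Sum>i=1..t. (real t / exp y) * ((real t - real i) * 2^i))"
    unfolding e1 by (rule sum_mono) (use trm in auto)
  also have "\<dots> = (real t / exp y) * (2^(t+1) - 2*real t - 2)"
    by (simp only: sum_distrib_left[symmetric] sum_lin2)
  also have "\<dots> \<le> (real t / exp y) * 2^(t+1)" by (intro mult_left_mono) auto
  finally show ?thesis by (simp add: field_simps)
qed



lemma lowC:
  assumes eq: "xy_eqs t m x y" and M1: "M \<ge> 1" and tM: "2*M \<le> t"
    and ey: "exp y \<le> real t * 2^t / 2^(M+2)"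
  shows "real M / 2 \<le> real t - m"
proof -
  let ?p = "pp x y"
  define L where "L = t - M"
  have L1: "L \<ge> 1" "L \<ge> M" "t = L + M" "L \<le> t - 1" using M1 tM by (auto simp: L_def)
  have s1: "(\<Sum>i=1..t. ?p i) = 1" and sm: "(\<Sum>i=1..t. real i * ?p i) = m"
    using pp_eqs[OF eq] by auto
  have e1: "real t - m = (\<Sum>i=1..t. (real t - real i) * ?p i)"
    using s1 sm by (simp add: algebra_simps sum_subtractf sum_distrib_left[symmetric])
  have ratio: "?p (Suc i) \<le> ?p i / 2" if "L \<le> i" "i < t" for i
  proof -
    have "2 * exp y \<le> 2^i * (real i + 1)"
    proof -
      have "2 * exp y \<le> real t * 2^t / 2^(M+1)" using ey by (simp add: field_simps)
      also have "\<dots> = real t * 2^L / 2" using L1(3) by (simp add: power_add field_simps)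
      also have "\<dots> \<le> (2 * real i) * 2^i / 2"
      proof -
        have "real t \<le> 2 * real i" using L1 that by linarith
        moreover have "(2::real)^L \<le> 2^i" using that by (simp add: power_increasing)
        ultimately show ?thesis by (intro divide_right_mono mult_mono) auto
      qed
      also have "\<dots> \<le> 2^i * (real i + 1)" by simp
      finally show ?thesis .
    qed
    moreover have A: "0 < (2::real)^i * (real i + 1)" by simp
    ultimately have "exp y / (2^i * (real i + 1)) \<le> 1/2"
      by (simp only: pos_divide_le_eq[OF A])
    then have "?p i * (exp y / (2^i * (real i + 1))) \<le> ?p i * (1/2)"
      using pp_nonneg by (intro mult_left_mono) auto
    then show ?thesis by (simp add: pp_Suc)
  qed
  define A where "A = (\<Sum>i=Suc L..t. ?p i)"
  have t1: "t = Suc (t - 1)" using L1 by auto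
  have "A = (\<Sum>i=L..t-1. ?p (Suc i))"
    unfolding A_def by (subst t1) (simp only: sum.shift_bounds_cl_Suc_ivl)
  also have "\<dots> \<le> (\<Sum>i=L..t-1. ?p i / 2)"
    by (rule sum_mono) (use ratio L1 in auto)
  also have "\<dots> = (?p L + (\<Sum>i=Suc L..t-1. ?p i)) / 2"
    using L1 by (simp add: sum_divide_distrib[symmetric] sum.atLeast_Suc_atMost)
  also have "\<dots> \<le> (?p L + A) / 2"
  proof -
    have "(\<Sum>i=Suc L..t-1. ?p i) \<le> A" unfolding A_def
      by (rule sum_mono2) (auto simp: pp_nonneg)
    then show ?thesis by simp
  qed
  finally have AL: "A \<le> ?p L" by simp
  have split: "{1..t} = {1..L} \<union> {Suc L..t}" using L1 by auto
  have B: "(\<Sum>i=1..L. ?p i) + A = 1"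
    using s1 unfolding split A_def by (subst (asm) sum.union_disjoint) auto
  have "?p L \<le> (\<Sum>i=1..L. ?p i)"
    by (rule member_le_sum) (use L1 pp_nonneg in auto)
  then have half: "1/2 \<le> (\<Sum>i=1..L. ?p i)" using AL B by simp
  have "real M / 2 \<le> real M * (\<Sum>i=1..L. ?p i)" using mult_left_mono[OF half, of "real M"] by simp
  also have "\<dots> = (\<Sum>i=1..L. real M * ?p i)" by (simp add: sum_distrib_left)
  also have "\<dots> \<le> (\<Sum>i=1..L. (real t - real i) * ?p i)"
    by (rule sum_mono) (use L1 pp_nonneg in \<open>auto intro!: mult_right_mono\<close>)
  also have "\<dots> \<le> (\<Sum>i=1..t. (real t - real i) * ?p i)"
    by (rule sum_mono2) (auto simp: L1 pp_nonneg)
  finally show ?thesis using e1 by simp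
qed

lemma uniqU:
  assumes eq1: "xy_eqs t m x y" and eq2: "xy_eqs t m x' y'" and t2: "t \<ge> 2" and yy: "y < y'"
  shows False
proof -
  let ?p = "pp x y" and ?q = "pp x' y'"
  let ?T = "{1..t}"
  have s1: "(\<Sum>i\<in>?T. ?p i) = 1" and sm: "(\<Sum>i\<in>?T. real i * ?p i) = m"
    using pp_eqs[OF eq1] by auto
  have s1': "(\<Sum>i\<in>?T. ?q i) = 1" and sm': "(\<Sum>i\<in>?T. real i * ?q i) = m"
    using pp_eqs[OF eq2] by auto
  define F where "F i j = (real i - real j) * (?q i * ?p j - ?p i * ?q j)" for i j
  have inner: "(\<Sum>j\<in>?T. F i j) = real i * ?q i - real i * ?p i - ?q i * m + ?p i * m" for i
  proof -
    have "(\<Sum>j\<in>?T. F i j) = (\<Sum>j\<in>?T. (real i * ?q i) * ?p j - (real i * ?p i) * ?q j - ?q i * (real j * ?p j) + ?p i * (real j * ?q j))"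
      unfolding F_def by (rule sum.cong) (auto simp: algebra_simps)
    also have "\<dots> = (real i * ?q i) * (\<Sum>j\<in>?T. ?p j) - (real i * ?p i) * (\<Sum>j\<in>?T. ?q j) - ?q i * (\<Sum>j\<in>?T. real j * ?p j) + ?p i * (\<Sum>j\<in>?T. real j * ?q j)"
      by (simp add: sum.distrib sum_subtractf sum_distrib_left)
    finally show ?thesis using s1 s1' sm sm' by simp
  qed
  have S0: "(\<Sum>i\<in>?T. \<Sum>j\<in>?T. F i j) = 0"
  proof -
    have "(\<Sum>i\<in>?T. \<Sum>j\<in>?T. F i j) = (\<Sum>i\<in>?T. real i * ?q i - real i * ?p i - ?q i * m + ?p i * m)"
      using inner by simp
    also have "\<dots> = (\<Sum>i\<in>?T. real i * ?q i) - (\<Sum>i\<in>?T. real i * ?p i) - (\<Sum>i\<in>?T. ?q i) * m + (\<Sum>i\<in>?T. ?p i) * m"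
      by (simp add: sum.distrib sum_subtractf sum_distrib_right)
    finally show ?thesis using s1 s1' sm sm' by simp
  qed
  define a where "a = x' - x"
  define b where "b = y' - y"
  have b0: "b > 0" using yy b_def by simp
  have qp: "?q i = ?p i * exp (a + real i * b)" for i
    by (simp add: pp_def a_def b_def exp_add[symmetric] algebra_simps)
  have Fform: "F i j = ?p i * ?p j * ((real i - real j) * (exp (a + real i * b) - exp (a + real j * b)))" for i j
    unfolding F_def qp by (simp add: algebra_simps)
  have Fnn: "F i j \<ge> 0" for i j
  proof -
    have "(real i - real j) * (exp (a + real i * b) - exp (a + real j * b)) \<ge> 0"
    proof (cases "i \<le> j")
      case True
      then have "exp (a + real i * b) \<le> exp (a + real j * b)" using b0 by (simp add: mult_right_mono)
      then show ?thesis using True by (intro mult_nonpos_nonpos) auto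
    next
      case False
      then have "exp (a + real j * b) \<le> exp (a + real i * b)" using b0 by (simp add: mult_right_mono)
      then show ?thesis using False by (intro mult_nonneg_nonneg) auto
    qed
    then show ?thesis unfolding Fform using pp_nonneg by simp
  qed
  have F21: "F 2 1 > 0"
  proof -
    have "exp (a + 1 * b) < exp (a + 2 * b)" using b0 by simp
    then have "(real 2 - real 1) * (exp (a + real 2 * b) - exp (a + real 1 * b)) > 0" by simp
    then show ?thesis unfolding Fform using pp_pos by simp
  qed
  have P2: "(\<Sum>j\<in>?T. F 2 j) > 0"
    by (rule sum_pos2[where i=1]) (use t2 F21 Fnn in auto)
  have "(\<Sum>i\<in>?T. \<Sum>j\<in>?T. F i j) > 0"
    by (rule sum_pos2[where i=2]) (use t2 Fnn P2 in \<open>auto intro: sum_nonneg\<close>)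
  then show False using S0 by simp
qed



lemma existsE:
  assumes t1: "t \<ge> 1" and c0: "c > 0" and r1: "3/2 \<le> \<rho>" and r2: "\<rho> \<le> real t - c"
  shows "\<exists>x y. xy_eqs t \<rho> x y"
proof -
  define Z where "Z y = (\<Sum>i=1..t. exp (real i * y) / d i)" for y
  define \<mu> where "\<mu> y = (\<Sum>i=1..t. real i * exp (real i * y) / d i) / Z y" for y
  have Zpos: "Z y > 0" for y
    unfolding Z_def by (rule sum_pos) (use t1 d_pos in auto)
  have Zne: "(\<Sum>i=1..t. exp (real i * y) / d i) \<noteq> 0" for y
    using Zpos[of y] unfolding Z_def by simp
  have sol: "xy_eqs t (\<mu> y) (- ln (Z y)) y" for y
  proof -
    have el: "exp (- ln (Z y)) = 1 / Z y" using Zpos[of y] by (simp add: exp_minus inverse_eq_divide)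
    have ex: "exp (- ln (Z y) + real i * y) = exp (real i * y) / Z y" for i
      unfolding exp_add el by simp
    have a: "(\<Sum>i=1..t. exp (real i * y) / Z y / d i) = (\<Sum>i=1..t. exp (real i * y) / d i) / Z y"
      unfolding sum_divide_distrib by (rule sum.cong) (simp_all add: divide_divide_eq_left mult.commute)
    have b: "(\<Sum>i=1..t. real i * (exp (real i * y) / Z y) / d i) = (\<Sum>i=1..t. real i * exp (real i * y) / d i) / Z y"
      unfolding sum_divide_distrib by (rule sum.cong) (simp_all add: divide_divide_eq_left mult.commute)
    show ?thesis unfolding xy_eqs_def ex a b
      using Zpos[of y] by (simp add: \<mu>_def Z_def)
  qed
  define y1 :: real where "y1 = - ln 4"
  define y2 where "y2 = ln (2 * real t * 2^t / c)"
  have "\<mu> y1 - 1 \<le> 2 * exp y1" by (rule lowA[OF sol]) (simp add: y1_def exp_minus)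
  then have m1: "\<mu> y1 \<le> \<rho>" using r1 by (simp add: y1_def exp_minus)
  have pos2: "2 * real t * 2^t / c > 0" using t1 c0 by simp
  have "real t - \<mu> y2 \<le> 2 * real t * 2^t / exp y2" by (rule highB[OF sol])
  also have "\<dots> = c" using pos2 c0 t1 by (simp add: y2_def)
  finally have m2: "\<rho> \<le> \<mu> y2" using r2 by simp
  have "1 \<le> 2 * real t * 2^t / c"
  proof -
    have "c \<le> real t" using r1 r2 by simp
    also have "\<dots> \<le> 2 * real t * 2^t"
    proof -
      have "(1::real) \<le> 2 * 2^t" using one_le_power[of "2::real" t] by linarith
      then show ?thesis using mult_left_mono[of 1 "2*2^t" "real t"] by simp
    qed
    finally show ?thesis using c0 by simp
  qed
  then have y12: "y1 \<le> y2" unfolding y1_def y2_def using ln_ge_zero[of "4::real"] ln_ge_zero[of "2 * real t * 2^t / c"] by linarith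
  have cont: "continuous_on {y1..y2} \<mu>"
    unfolding \<mu>_def Z_def using Zpos unfolding Z_def
    by (intro continuous_intros) (auto simp: less_imp_neq[OF d_pos, symmetric], metis less_irrefl)
  obtain y where "\<mu> y = \<rho>" using IVT'[of \<mu> y1 \<rho> y2, OF m1 m2 y12 cont] by auto
  then show ?thesis using sol[of y] by auto
qed

lemma unique_xy:
  assumes "xy_eqs t m x y" "t \<ge> 2"
  shows "xy t m = (x, y)"
  unfolding xy_def
proof (rule the_equality)
  show "xy_eqs t m (fst (x, y)) (snd (x, y))" using assms by simp
next
  fix p assume p: "xy_eqs t m (fst p) (snd p)"
  have yy: "snd p = y"
  proof (rule ccontr)
    assume "snd p \<noteq> y"
    then consider "snd p < y" | "y < snd p" by linarith
    then show False
    proof cases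
      case 1 then show False using uniqU[OF p assms(1) assms(2)] by simp
    next
      case 2 then show False using uniqU[OF assms(1) p assms(2)] by simp
    qed
  qed
  have e1: "(\<Sum>i=1..t. exp (x + real i * y) / d i) = 1"
    and e2: "(\<Sum>i=1..t. exp (fst p + real i * y) / d i) = 1"
    using assms(1) p yy by (auto simp: xy_eqs_def)
  have f: "(\<Sum>i=1..t. exp (u + real i * y) / d i) = exp u * (\<Sum>i=1..t. exp (real i * y) / d i)" for u
    by (simp add: sum_distrib_left exp_add)
  have Zp: "(\<Sum>i=1..t. exp (real i * y) / d i) > 0"
    by (rule sum_pos) (use assms(2) d_pos in auto)
  have "exp x * (\<Sum>i=1..t. exp (real i * y) / d i) = exp (fst p) * (\<Sum>i=1..t. exp (real i * y) / d i)"
    using e1 e2 f by metis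
  then have "exp x = exp (fst p)" using Zp by simp
  then have "fst p = x" by simp
  then show "p = (x, y)" using yy by (cases p) auto
qed



theorem lemma36:
  fixes c C :: real
  assumes "0 < c" and "c < C"
  shows "\<exists>K::real. \<forall>(t::nat) (\<rho>::real).
           t > 0 \<longrightarrow> \<rho> \<ge> 2 \<longrightarrow> c < real t - \<rho> \<longrightarrow> real t - \<rho> < C \<longrightarrow>
           \<bar>y_t t \<rho> - ln (real t * 2 ^ t)\<bar> \<le> K"
proof -
  define M where "M = nat \<lceil>2*C\<rceil> + 1"
  define s0 :: real where "s0 = 1 / (4 * real M * 4^M)"
  have M1: "M \<ge> 1" by (simp add: M_def)
  have MC: "2 * C < real M" unfolding M_def by linarith
  have s0pos: "s0 > 0" using M1 by (simp add: s0_def)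
  show ?thesis
  proof (intro exI allI impI)
    fix t :: nat and \<rho> :: real
    assume t0: "t > 0" and r2: "\<rho> \<ge> 2" and lo: "c < real t - \<rho>" and hi: "real t - \<rho> < C"
    have t2: "t \<ge> 2" using r2 lo assms(1) by linarith
    obtain x y where sol: "xy_eqs t \<rho> x y"
      using existsE[of t c \<rho>] t2 assms(1) r2 lo by auto
    have yt: "y_t t \<rho> = y" using unique_xy[OF sol t2] by (simp add: y_t_def)
    define T where "T = real t * 2^t"
    have Tpos: "T > 0" using t0 by (simp add: T_def)
    define s where "s = exp y / T"
    have spos: "s > 0" using Tpos by (simp add: s_def)
    have lns: "y - ln T = ln s" using Tpos by (simp add: s_def ln_div)
    have up: "s < 2 / c"
    proof -
      have "c < 2 * T / exp y" using highB[OF sol] lo by (simp add: T_def)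
      then have "c * exp y < 2 * T" by (simp add: field_simps)
      then show ?thesis using Tpos assms(1) by (simp add: s_def field_simps)
    qed
    have low: "s0 \<le> s"
    proof (cases "2 * M \<le> t")
      case True
      have "\<not> exp y \<le> real t * 2^t / 2^(M+2)"
      proof
        assume "exp y \<le> real t * 2^t / 2^(M+2)"
        from lowC[OF sol M1 True this] hi MC show False by linarith
      qed
      then have "T / 2^(M+2) < exp y" by (simp add: T_def)
      then have a: "1 / 2^(M+2) < s" using Tpos by (simp add: s_def field_simps)
      have "(2::real)^(M+2) \<le> 4 * real M * 4^M"
      proof -
        have "(2::real)^M \<le> 4^M" by (simp add: power_mono)
        also have "\<dots> \<le> real M * 4^M" using M1 by simp
        finally show ?thesis by (simp add: power_add)
      qed
      then have "s0 \<le> 1 / 2^(M+2)" unfolding s0_def by (intro divide_left_mono) (use M1 in auto)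
      then show ?thesis using a by simp
    next
      case False
      have ey: "1/2 \<le> exp y"
      proof (cases "exp y \<le> 1")
        case True
        from lowA[OF sol True] r2 show ?thesis by simp
      qed linarith
      have "T \<le> 2 * real M * 4^M"
      proof -
        have "real t \<le> 2 * real M" using False by simp
        moreover have "(2::real)^t \<le> 4^M"
        proof -
          have "(2::real)^t \<le> 2^(2*M)" using False by (intro power_increasing) auto
          then show ?thesis by (simp add: power_mult)
        qed
        ultimately show ?thesis unfolding T_def by (intro mult_mono) auto
      qed
      then have "s0 \<le> (1/2) / T" unfolding s0_def using Tpos
        by (simp add: field_simps)
      also have "\<dots> \<le> s" unfolding s_def using ey Tpos by (intro divide_right_mono) auto
      finally show ?thesis .
    qed
    have "ln s0 \<le> ln s" using low s0pos by (intro ln_mono) auto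
    moreover have "ln s \<le> ln (2/c)" using up spos by (intro ln_mono) auto
    ultimately show "\<bar>y_t t \<rho> - ln (real t * 2 ^ t)\<bar> \<le> max (- ln s0) (ln (2/c))"
      unfolding yt T_def[symmetric] lns by linarith
  qed
qed


end
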